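(* Let $\bar{\mathcal{L}}$ be the Laplacian of an undirected connected graph on $n$ nodes, and for $i=1,\dots,n$ let $f_i:\mathbb{R}^m\to\mathbb{R}$ be convex with Hessian $H_i$ at a point $x^*$, such that $\sum_{i=1}^nH_i$ is positive definite. Then the matrix $F=-\begin{pmatrix}\bar{\mathcal{L}}\otimes\mathbf{I}_m+\mathcal{H}&\mathcal{V}_1\mathcal{S}\otimes\mathbf{I}_m\\-\mathcal{S}\mathcal{V}_1^T\otimes\mathbf{I}_m&0\end{pmatrix}$ is Hurwitz (all eigenvalues have negative real part).
   Context: $\mathcal{H}=\mathrm{diag}\{H_1,\dots,H_n\}$ (block diagonal). $\mathcal{V}=(\mathcal{V}_1\ \mathcal{V}_2)$ is an orthogonal $n\times n$ matrix with $\mathcal{V}_2=\mathbf{1}/\sqrt n$ and the columns of $\mathcal{V}_1\in\mathbb{R}^{n\times(n-1)}$ eigenvectors of $\bar{\mathcal{L}}$ corresponding to its positive eigenvalues $\kappa_2,\dots,\kappa_n$, so that $\mathcal{V}^T\bar{\mathcal{L}}\mathcal{V}=\mathrm{diag}(\mathcal{S},0)$ with $\mathcal{S}=\mathrm{diag}(\kappa_2,\dots,\kappa_n)$. *)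

theory Defs
  imports "HOL-Analysis.Analysis" "Jordan_Normal_Form.Matrix" "Jordan_Normal_Form.Char_Poly"
begin

definition kron :: "'a::times mat \<Rightarrow> 'a mat \<Rightarrow> 'a mat" where
  "kron A B = mat (dim_row A * dim_row B) (dim_col A * dim_col B)
     (\<lambda>(i,j). A $$ (i div dim_row B, j div dim_col B) * B $$ (i mod dim_row B, j mod dim_col B))"

definition undirected_graph :: "nat \<Rightarrow> (nat \<Rightarrow> nat \<Rightarrow> bool) \<Rightarrow> bool" where
  "undirected_graph n E \<longleftrightarrow> (\<forall>i<n. \<forall>j<n. E i j \<longleftrightarrow> E j i) \<and> (\<forall>i<n. \<not> E i i)"

definition graph_connected :: "nat \<Rightarrow> (nat \<Rightarrow> nat \<Rightarrow> bool) \<Rightarrow> bool" where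
  "graph_connected n E \<longleftrightarrow>
     (\<forall>i<n. \<forall>j<n. (i, j) \<in> {(a, b). a < n \<and> b < n \<and> E a b}\<^sup>*)"

definition laplacian :: "nat \<Rightarrow> (nat \<Rightarrow> nat \<Rightarrow> bool) \<Rightarrow> real mat" where
  "laplacian n E = mat n n (\<lambda>(i,j).
     if i = j then real (card {k. k < n \<and> E i k}) else if E i j then -1 else 0)"

definition has_hessian_at :: "(real^'m \<Rightarrow> real) \<Rightarrow> real^'m^'m \<Rightarrow> real^'m \<Rightarrow> bool" where
  "has_hessian_at f H x \<longleftrightarrow> (\<exists>g. (\<forall>\<^sub>F y in nhds x. (f has_derivative (\<lambda>h. g y \<bullet> h)) (at y))
       \<and> (g has_derivative (\<lambda>h. H *v h)) (at x))"

definition pos_def_hma :: "real^'m^'m \<Rightarrow> bool" where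
  "pos_def_hma A \<longleftrightarrow> (\<forall>v. v \<noteq> 0 \<longrightarrow> v \<bullet> (A *v v) > 0)"

definition coord_enum :: "nat \<Rightarrow> 'm::finite" where
  "coord_enum = (SOME g. bij_betw g {0..<CARD('m)} (UNIV :: 'm set))"

definition to_mat :: "real^'m::finite^'m \<Rightarrow> real mat" where
  "to_mat A = mat CARD('m) CARD('m) (\<lambda>(i,j). A $ coord_enum i $ coord_enum j)"

(* block diagonal diag{H_1,...,H_n} (H indexed from 0) *)
definition block_diag :: "nat \<Rightarrow> (nat \<Rightarrow> real^'m::finite^'m) \<Rightarrow> real mat" where
  "block_diag n H = mat (n * CARD('m)) (n * CARD('m)) (\<lambda>(i,j).
     if i div CARD('m) = j div CARD('m)
     then to_mat (H (i div CARD('m))) $$ (i mod CARD('m), j mod CARD('m)) else 0)"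

definition hurwitz :: "real mat \<Rightarrow> bool" where
  "hurwitz A \<longleftrightarrow> (\<forall>k. eigenvalue (map_mat complex_of_real A) k \<longrightarrow> Re k < 0)"

end

theory Submission
  imports Defs
begin



lemma hess_psd:
  fixes f :: "real^'m \<Rightarrow> real" and H :: "real^'m^'m"
  assumes cvx: "convex_on UNIV f" and h: "has_hessian_at f H x"
  shows "v \<bullet> (H *v v) \<ge> 0"
proof -
  obtain g where ev: "\<forall>\<^sub>F y in nhds x. (f has_derivative (\<lambda>h. g y \<bullet> h)) (at y)"
    and gd: "(g has_derivative (\<lambda>h. H *v h)) (at x)"
    using h unfolding has_hessian_at_def by blast
  from ev obtain e where e: "e > 0" and eb: "\<And>y. dist y x < e \<Longrightarrow> (f has_derivative (\<lambda>h. g y \<bullet> h)) (at y)"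
    unfolding eventually_nhds_metric by blast
  define \<phi> where "\<phi> s = f (x + s *\<^sub>R v)" for s
  define \<psi> where "\<psi> s = g (x + s *\<^sub>R v) \<bullet> v" for s
  have cphi: "convex_on UNIV \<phi>"
  proof (rule convex_onI)
    fix t a b :: real assume t: "0 < t" "t < 1"
    have "x + ((1 - t) *\<^sub>R a + t *\<^sub>R b) *\<^sub>R v = (1 - t) *\<^sub>R (x + a *\<^sub>R v) + t *\<^sub>R (x + b *\<^sub>R v)"
      by (simp add: algebra_simps)
    then show "\<phi> ((1 - t) *\<^sub>R a + t *\<^sub>R b) \<le> (1 - t) * \<phi> a + t * \<phi> b"
      unfolding \<phi>_def using convex_onD[OF cvx, of t] t by simp
  qed simp
  have dphi: "(\<phi> has_real_derivative \<psi> s) (at s)" if "\<bar>s\<bar> * norm v < e" for s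
  proof -
    have "dist (x + s *\<^sub>R v) x < e" using that by (simp add: dist_norm)
    then have d1: "(f has_derivative (\<lambda>h. g (x + s *\<^sub>R v) \<bullet> h)) (at (x + s *\<^sub>R v))" by (rule eb)
    have d2: "((\<lambda>s. x + s *\<^sub>R v) has_derivative (\<lambda>t. t *\<^sub>R v)) (at s)"
      by (auto intro!: derivative_eq_intros)
    have "((\<lambda>s. f (x + s *\<^sub>R v)) has_derivative (\<lambda>t. g (x + s *\<^sub>R v) \<bullet> (t *\<^sub>R v))) (at s)"
      using has_derivative_compose[OF d2 d1] by (simp add: o_def)
    moreover have "(\<lambda>t. g (x + s *\<^sub>R v) \<bullet> (t *\<^sub>R v)) = (*) (\<psi> s)"
      by (auto simp: \<psi>_def)
    ultimately show ?thesis unfolding has_field_derivative_def \<phi>_def[abs_def] by simp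
  qed
  have mono: "\<psi> 0 \<le> \<psi> s" if "0 < s" "s * norm v < e" for s
  proof -
    have s0: "\<bar>0\<bar> * norm v < e" using e by simp
    have ss: "\<bar>s\<bar> * norm v < e" using that by simp
    have "\<psi> s * (0 - s) \<le> \<phi> 0 - \<phi> s"
      by (rule convex_on_imp_above_tangent[OF cphi]) (use dphi[OF ss] in \<open>auto\<close>)
    moreover have "\<psi> 0 * (s - 0) \<le> \<phi> s - \<phi> 0"
      by (rule convex_on_imp_above_tangent[OF cphi]) (use dphi[OF s0] in \<open>auto\<close>)
    ultimately have "\<psi> 0 * s \<le> \<psi> s * s" by (simp add: algebra_simps)
    with that show ?thesis by simp
  qed
  have dpsi: "(\<psi> has_real_derivative (H *v v) \<bullet> v) (at 0)"
  proof -
    have d2: "((\<lambda>s. x + s *\<^sub>R v) has_derivative (\<lambda>t. t *\<^sub>R v)) (at 0)"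
      by (auto intro!: derivative_eq_intros)
    have gd': "(g has_derivative (\<lambda>h. H *v h)) (at (x + 0 *\<^sub>R v))" using gd by simp
    have "((\<lambda>s. g (x + s *\<^sub>R v)) has_derivative (\<lambda>t. H *v (t *\<^sub>R v))) (at 0)"
      using has_derivative_compose[OF d2 gd'] by (simp add: o_def)
    then have "((\<lambda>s. g (x + s *\<^sub>R v) \<bullet> v) has_derivative (\<lambda>t. (H *v (t *\<^sub>R v)) \<bullet> v)) (at 0)"
      by (auto intro!: derivative_eq_intros)
    moreover have "(\<lambda>t. (H *v (t *\<^sub>R v)) \<bullet> v) = (*) ((H *v v) \<bullet> v)"
      by (auto simp: matrix_vector_mult_scaleR)
    ultimately show ?thesis unfolding has_field_derivative_def \<psi>_def[abs_def] by simp
  qed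
  show ?thesis
  proof (rule ccontr)
    assume "\<not> ?thesis"
    then have "(H *v v) \<bullet> v < 0" by (simp add: inner_commute)
    from DERIV_neg_dec_right[OF dpsi this] obtain d where d: "d > 0"
      "\<And>h. h > 0 \<Longrightarrow> h < d \<Longrightarrow> \<psi> (0 + h) < \<psi> 0" by blast
    define s where "s = min (d/2) (e / (2 * (norm v + 1)))"
    have s0: "s > 0" using d e by (simp add: s_def) (smt (verit) divide_pos_pos norm_ge_zero)
    have "s * norm v < e"
    proof -
      have "s * norm v \<le> (e / (2 * (norm v + 1))) * (norm v + 1)"
        using s0 by (intro mult_mono) (auto simp: s_def)
      also have "\<dots> = e / 2"
      proof -
        have "2 * norm v + 2 \<noteq> 0" using norm_ge_zero[of v] by linarith
        then show ?thesis by (simp add: divide_simps)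
      qed
      finally show ?thesis using e by simp
    qed
    with mono s0 have "\<psi> 0 \<le> \<psi> s" by blast
    moreover have "\<psi> (0 + s) < \<psi> 0" using d s0 by (intro d(2)) (auto simp: s_def)
    ultimately show False by simp
  qed
qed



lemma coord_enum_bij: "bij_betw (coord_enum :: nat \<Rightarrow> 'm::finite) {0..<CARD('m)} UNIV"
proof -
  obtain h :: "nat \<Rightarrow> 'm" where "bij_betw h {0..<CARD('m)} UNIV"
    using ex_bij_betw_nat_finite[of "UNIV::'m set"] by auto
  then show ?thesis unfolding coord_enum_def by (rule someI[where P="\<lambda>g. bij_betw g {0..<CARD('m)} (UNIV::'m set)"])
qed

lemma sum_UNIV_enum: "(\<Sum>k\<in>(UNIV::'m::finite set). F k) = (\<Sum>c<CARD('m). F (coord_enum c))"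
  using sum.reindex_bij_betw[OF coord_enum_bij, of F] by (simp add: atLeast0LessThan)

definition cvec :: "(nat \<Rightarrow> real) \<Rightarrow> real^'m::finite" where
  "cvec u = (\<chi> k. u (inv_into {0..<CARD('m)} coord_enum k))"

lemma cvec_nth: "c < CARD('m::finite) \<Longrightarrow> (cvec u :: real^'m) $ coord_enum c = u c"
  unfolding cvec_def using coord_enum_bij[where 'm='m]
  by (simp add: bij_betw_def inv_into_f_f)

lemma quad_to_mat:
  fixes X :: "real^'m::finite^'m"
  shows "(\<Sum>c<CARD('m). \<Sum>d<CARD('m). u c * to_mat X $$ (c,d) * u d) = cvec u \<bullet> (X *v cvec u)"
proof -
  have "cvec u \<bullet> (X *v cvec u) = (\<Sum>k\<in>UNIV. (cvec u :: real^'m) $ k * (\<Sum>j\<in>UNIV. X $ k $ j * (cvec u :: real^'m) $ j))"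
    by (simp add: inner_vec_def matrix_vector_mult_def)
  also have "\<dots> = (\<Sum>c<CARD('m). \<Sum>d<CARD('m). u c * to_mat X $$ (c,d) * u d)"
    by (simp add: sum_UNIV_enum cvec_nth to_mat_def sum_distrib_left mult.assoc)
  finally show ?thesis by simp
qed

lemma cvec_zero: "(cvec u :: real^'m::finite) = 0 \<Longrightarrow> c < CARD('m) \<Longrightarrow> u c = 0"
  by (metis cvec_nth zero_index)

lemma quad_sum_mat:
  fixes H :: "nat \<Rightarrow> real^'m::finite^'m"
  shows "w \<bullet> ((\<Sum>p<n. H p) *v w) = (\<Sum>p<n. w \<bullet> (H p *v w))"
  by (induct n) (simp_all add: matrix_vector_mult_add_rdistrib inner_add_right)


lemma sum_lt_add: "(\<Sum>i<(a::nat)+b. f i) = (\<Sum>i<a. f i) + (\<Sum>i<b. f (a+i))"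
  by (induct b) (simp_all add: add.assoc)

lemma sum_lt_mult: "(\<Sum>i<(n::nat)*m. f i) = (\<Sum>p<n. \<Sum>c<m. f (p*m+c))"
proof (induct n)
  case (Suc n)
  have "Suc n * m = n*m + m" by simp
  then have "(\<Sum>i<Suc n * m. f i) = (\<Sum>i<n*m. f i) + (\<Sum>i<m. f (n*m+i))"
    by (simp only: sum_lt_add)
  then show ?case using Suc by simp
qed simp

lemma lap_quad:
  assumes g: "undirected_graph n E"
  shows "(\<Sum>p<n. \<Sum>q<n. x p * laplacian n E $$ (p,q) * x q)
       = (\<Sum>p<n. \<Sum>q<n. if E p q then (x p - x q)^2 else 0) / 2"
proof -
  have sym: "\<And>p q. p<n \<Longrightarrow> q<n \<Longrightarrow> E p q = E q p" and irr: "\<And>p. p<n \<Longrightarrow> \<not> E p p"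
    using g unfolding undirected_graph_def by auto
  have deg: "real (card {k. k < n \<and> E p k}) = (\<Sum>q<n. if E p q then 1 else 0)" for p
  proof -
    have "{k. k < n \<and> E p k} = {q\<in>{..<n}. E p q}" by auto
    then show ?thesis by (simp add: sum.inter_filter[symmetric])
  qed
  have row: "(\<Sum>q<n. x p * laplacian n E $$ (p,q) * x q) = (\<Sum>q<n. if E p q then x p^2 - x p * x q else 0)"
    if p: "p < n" for p
  proof -
    have "(\<Sum>q<n. x p * laplacian n E $$ (p,q) * x q)
        = (\<Sum>q<n. (if p = q then x p * x p * real (card {k. k < n \<and> E p k}) else 0) - (if E p q then x p * x q else 0))"
      by (rule sum.cong) (auto simp: laplacian_def p irr)
    also have "\<dots> = x p * x p * real (card {k. k < n \<and> E p k}) - (\<Sum>q<n. if E p q then x p * x q else 0)"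
      using p by (simp add: sum_subtractf)
    also have "\<dots> = (\<Sum>q<n. if E p q then x p^2 - x p * x q else 0)"
      unfolding deg sum_distrib_left by (simp add: sum_subtractf[symmetric] power2_eq_square if_distrib cong: if_cong)
    finally show ?thesis .
  qed
  define S where "S = (\<Sum>p<n. \<Sum>q<n. if E p q then x p^2 - x p * x q else 0)"
  have S1: "(\<Sum>p<n. \<Sum>q<n. x p * laplacian n E $$ (p,q) * x q) = S"
    unfolding S_def by (rule sum.cong) (auto simp: row)
  have "S = (\<Sum>q<n. \<Sum>p<n. if E p q then x p^2 - x p * x q else 0)"
    unfolding S_def by (rule sum.swap)
  also have "\<dots> = (\<Sum>q<n. \<Sum>p<n. if E q p then x p^2 - x p * x q else 0)"
    by (intro sum.cong refl) (auto simp: sym)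
  finally have S2: "S = (\<Sum>p<n. \<Sum>q<n. if E p q then x q^2 - x q * x p else 0)" .
  have "2 * S = (\<Sum>p<n. \<Sum>q<n. if E p q then (x p - x q)^2 else 0)"
  proof -
    have "2 * S = S + S" by simp
    also have "\<dots> = (\<Sum>p<n. \<Sum>q<n. (if E p q then x p^2 - x p * x q else 0) + (if E p q then x q^2 - x q * x p else 0))"
      by (subst S2) (simp add: S_def sum.distrib)
    also have "\<dots> = (\<Sum>p<n. \<Sum>q<n. if E p q then (x p - x q)^2 else 0)"
      by (intro sum.cong refl) (auto simp: power2_eq_square algebra_simps)
    finally show ?thesis .
  qed
  then show ?thesis using S1 by simp
qed

lemma lap_nonneg:
  assumes g: "undirected_graph n E"
  shows "(\<Sum>p<n. \<Sum>q<n. x p * laplacian n E $$ (p,q) * x q) \<ge> 0"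
  unfolding lap_quad[OF g] by (intro divide_nonneg_pos sum_nonneg) auto

lemma lap_zero:
  assumes g: "undirected_graph n E" and c: "graph_connected n E"
    and z: "(\<Sum>p<n. \<Sum>q<n. x p * laplacian n E $$ (p,q) * x q) = 0"
    and i: "i < n" and j: "j < n"
  shows "x i = x j"
proof -
  have "(\<Sum>p<n. \<Sum>q<n. if E p q then (x p - x q)^2 else 0) = (0::real)"
    using z unfolding lap_quad[OF g] by simp
  then have "\<forall>p\<in>{..<n}. (\<Sum>q<n. if E p q then (x p - x q)^2 else 0) = (0::real)"
    by (subst (asm) sum_nonneg_eq_0_iff) (auto intro!: sum_nonneg)
  then have e: "\<And>p q. p < n \<Longrightarrow> q < n \<Longrightarrow> E p q \<Longrightarrow> x p = x q"
    by (auto simp: sum_nonneg_eq_0_iff split: if_splits)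
  have "(i, j) \<in> {(a, b). a < n \<and> b < n \<and> E a b}\<^sup>*" using c i j unfolding graph_connected_def by blast
  then show ?thesis
    by (induct rule: rtrancl_induct) (auto dest: e)
qed


lemma four_block_quad:
  fixes A B C :: "real mat"
  assumes A: "A \<in> carrier_mat N N" and B: "B \<in> carrier_mat N K" and C: "C \<in> carrier_mat K N"
    and CB: "\<And>i j. i < K \<Longrightarrow> j < N \<Longrightarrow> C $$ (i,j) = - B $$ (j,i)"
  shows "(\<Sum>i<N+K. z i * (\<Sum>j<N+K. four_block_mat A B C (0\<^sub>m K K) $$ (i,j) * z j))
       = (\<Sum>i<N. z i * (\<Sum>j<N. A $$ (i,j) * z j))"
proof -
  let ?M = "four_block_mat A B C (0\<^sub>m K K)"
  have row1: "(\<Sum>j<N+K. ?M $$ (i,j) * z j) = (\<Sum>j<N. A $$ (i,j) * z j) + (\<Sum>j<K. B $$ (i,j) * z (N+j))"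
    if i: "i < N" for i
  proof -
    have e1: "\<And>j. j \<in> {..<N} \<Longrightarrow> ?M $$ (i,j) * z j = A $$ (i,j) * z j" using i A by simp
    have e2: "\<And>j. j \<in> {..<K} \<Longrightarrow> ?M $$ (i,N+j) * z (N+j) = B $$ (i,j) * z (N+j)" using i A by simp
    have s1: "(\<Sum>j<N. ?M $$ (i,j) * z j) = (\<Sum>j<N. ?M $$ (i,j) * z j)" by simp
    show ?thesis unfolding sum_lt_add
      by (intro arg_cong2[where f="(+)"] sum.cong refl) (simp_all only: e1 e2)
  qed
  have row2: "(\<Sum>j<N+K. ?M $$ (N+i,j) * z j) = (\<Sum>j<N. C $$ (i,j) * z j)"
    if i: "i < K" for i
  proof -
    have e1: "\<And>j. j \<in> {..<N} \<Longrightarrow> ?M $$ (N+i,j) * z j = C $$ (i,j) * z j" using i A by simp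
    have e2: "\<And>j. j \<in> {..<K} \<Longrightarrow> ?M $$ (N+i,N+j) * z (N+j) = 0" using i A by simp
    have z2: "(\<Sum>j<K. ?M $$ (N+i,N+j) * z (N+j)) = 0" by (rule sum.neutral) (use e2 in blast)
    have z1: "(\<Sum>j<N. ?M $$ (N+i,j) * z j) = (\<Sum>j<N. C $$ (i,j) * z j)" by (rule sum.cong) (use e1 in auto)
    show ?thesis unfolding sum_lt_add z1 z2 by simp
  qed
  have cross: "(\<Sum>i<N. z i * (\<Sum>j<K. B $$ (i,j) * z (N+j))) + (\<Sum>i<K. z (N+i) * (\<Sum>j<N. C $$ (i,j) * z j)) = 0"
  proof -
    have "(\<Sum>i<K. z (N+i) * (\<Sum>j<N. C $$ (i,j) * z j)) = (\<Sum>i<K. \<Sum>j<N. - (z j * B $$ (j,i) * z (N+i)))"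
      by (auto simp: sum_distrib_left CB intro!: sum.cong)
    also have "\<dots> = - (\<Sum>j<N. \<Sum>i<K. z j * B $$ (j,i) * z (N+i))"
      by (subst sum.swap) (simp add: sum_negf)
    also have "\<dots> = - (\<Sum>i<N. z i * (\<Sum>j<K. B $$ (i,j) * z (N+j)))"
      by (simp add: sum_distrib_left mult.assoc)
    finally show ?thesis by simp
  qed
  have "(\<Sum>i<N+K. z i * (\<Sum>j<N+K. ?M $$ (i,j) * z j))
      = (\<Sum>i<N. z i * ((\<Sum>j<N. A $$ (i,j) * z j) + (\<Sum>j<K. B $$ (i,j) * z (N+j))))
        + (\<Sum>i<K. z (N+i) * (\<Sum>j<N. C $$ (i,j) * z j))"
    unfolding sum_lt_add[of "\<lambda>i. z i * (\<Sum>j<N+K. ?M $$ (i,j) * z j)" N K]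
    by (intro arg_cong2[where f="(+)"] sum.cong) (simp_all add: row1 row2 del: index_mat_four_block)
  also have "\<dots> = (\<Sum>i<N. z i * (\<Sum>j<N. A $$ (i,j) * z j))"
    using cross by (simp add: distrib_left sum.distrib)
  finally show ?thesis .
qed



lemma eig_parts:
  fixes M :: "real mat"
  assumes M: "M \<in> carrier_mat T T" and ev: "eigenvector (map_mat complex_of_real (-M)) v k"
  shows "v \<in> carrier_vec T" "v \<noteq> 0\<^sub>v T"
    "\<And>i. i < T \<Longrightarrow> (\<Sum>j<T. M $$ (i,j) * Re (vec_index v j)) = - Re k * Re (vec_index v i) + Im k * Im (vec_index v i)"
    "\<And>i. i < T \<Longrightarrow> (\<Sum>j<T. M $$ (i,j) * Im (vec_index v j)) = - Re k * Im (vec_index v i) - Im k * Re (vec_index v i)"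
proof -
  have dr: "dim_row (map_mat complex_of_real (-M)) = T" "dim_col (map_mat complex_of_real (-M)) = T"
    using M by auto
  have evd: "v \<in> carrier_vec T \<and> v \<noteq> 0\<^sub>v T \<and> map_mat complex_of_real (-M) *\<^sub>v v = k \<cdot>\<^sub>v v"
    using ev unfolding eigenvector_def dr .
  have v: "v \<in> carrier_vec T" "v \<noteq> 0\<^sub>v T" and eq: "map_mat complex_of_real (-M) *\<^sub>v v = k \<cdot>\<^sub>v v"
    using evd by (blast, blast, blast)
  show "v \<in> carrier_vec T" "v \<noteq> 0\<^sub>v T" by (fact v(1), fact v(2))
  have dv: "dim_vec v = T" using v(1) by (rule carrier_vecD)
  have comp: "(\<Sum>j<T. complex_of_real (M $$ (i,j)) * vec_index v j) = - (k * vec_index v i)" if i: "i < T" for i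
  proof -
    have "k * vec_index v i = vec_index (k \<cdot>\<^sub>v v) i" using i dv by simp
    also have "\<dots> = vec_index (map_mat complex_of_real (-M) *\<^sub>v v) i" using eq by simp
    also have "\<dots> = scalar_prod (Matrix.row (map_mat complex_of_real (-M)) i) v"
      using i dr by simp
    also have "\<dots> = (\<Sum>j\<in>{0..<T}. vec_index (Matrix.row (map_mat complex_of_real (-M)) i) j * vec_index v j)"
      unfolding scalar_prod_def dv ..
    also have "\<dots> = (\<Sum>j<T. - (complex_of_real (M $$ (i,j)) * vec_index v j))"
      unfolding atLeast0LessThan using i M by (intro sum.cong refl) simp
    finally have "k * vec_index v i = - (\<Sum>j<T. complex_of_real (M $$ (i,j)) * vec_index v j)" by (simp add: sum_negf)
    then show ?thesis by simp
  qed
  show "(\<Sum>j<T. M $$ (i,j) * Re (vec_index v j)) = - Re k * Re (vec_index v i) + Im k * Im (vec_index v i)" if "i < T" for i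
    using arg_cong[OF comp[OF that], of Re] by (simp add: Re_sum)
  show "(\<Sum>j<T. M $$ (i,j) * Im (vec_index v j)) = - Re k * Im (vec_index v i) - Im k * Re (vec_index v i)" if "i < T" for i
    using arg_cong[OF comp[OF that], of Im] by (simp add: Im_sum)
qed

lemma sum_zero_each: "finite S \<Longrightarrow> (\<forall>x\<in>S. 0 \<le> f x) \<Longrightarrow> sum f S = (0::real) \<Longrightarrow> x \<in> S \<Longrightarrow> f x = 0"
  using sum_nonneg_eq_0_iff by blast




theorem lemma7:
  fixes n :: nat and E :: "nat \<Rightarrow> nat \<Rightarrow> bool"
    and f :: "nat \<Rightarrow> real^'m \<Rightarrow> real" and H :: "nat \<Rightarrow> real^'m^'m" and xs :: "real^'m"
    and V1 :: "real mat" and \<kappa> :: "nat \<Rightarrow> real"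
  assumes n: "n \<ge> 1"
    and graph: "undirected_graph n E" and conn: "graph_connected n E"
    and cvx: "\<forall>i<n. convex_on UNIV (f i)"
    and hess: "\<forall>i<n. has_hessian_at (f i) (H i) xs"
    and pd: "pos_def_hma (\<Sum>i<n. H i)"
    and V1_dim: "V1 \<in> carrier_mat n (n - 1)"
    and kappa_pos: "\<forall>k < n - 1. \<kappa> k > 0"
    and V_orth: "transpose_mat (mat n n (\<lambda>(i,j). if j < n - 1 then V1 $$ (i,j) else 1 / sqrt (real n)))
                 * mat n n (\<lambda>(i,j). if j < n - 1 then V1 $$ (i,j) else 1 / sqrt (real n)) = 1\<^sub>m n"
    and V_diag: "transpose_mat (mat n n (\<lambda>(i,j). if j < n - 1 then V1 $$ (i,j) else 1 / sqrt (real n)))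
                 * laplacian n E
                 * mat n n (\<lambda>(i,j). if j < n - 1 then V1 $$ (i,j) else 1 / sqrt (real n))
                 = mat n n (\<lambda>(i,j). if i = j \<and> i < n - 1 then \<kappa> i else 0)"
  shows "hurwitz (- four_block_mat
            (kron (laplacian n E) (1\<^sub>m CARD('m)) + block_diag n H)
            (kron (V1 * mat (n - 1) (n - 1) (\<lambda>(i,j). if i = j then \<kappa> i else 0)) (1\<^sub>m CARD('m)))
            (- kron (mat (n - 1) (n - 1) (\<lambda>(i,j). if i = j then \<kappa> i else 0) * transpose_mat V1) (1\<^sub>m CARD('m)))
            (0\<^sub>m ((n - 1) * CARD('m)) ((n - 1) * CARD('m))))"
proof -
  define m where "m = CARD('m)"
  have m0: "0 < m" by (simp add: m_def)
  define N where "N = n*m"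
  define K where "K = (n-1)*m"
  define L where "L = laplacian n E"
  define Sm where "Sm = mat (n - 1) (n - 1) (\<lambda>(i,j). if i = j then \<kappa> i else (0::real))"
  define A where "A = kron L (1\<^sub>m m) + block_diag n H"
  define B where "B = kron (V1 * Sm) (1\<^sub>m m)"
  define C where "C = - kron (Sm * transpose_mat V1) (1\<^sub>m m)"
  define M where "M = four_block_mat A B C (0\<^sub>m K K)"
  have Lc: "L \<in> carrier_mat n n" by (simp add: L_def laplacian_def)
  have Ac: "A \<in> carrier_mat N N"
    using Lc by (simp add: A_def kron_def block_diag_def N_def m_def)
  have Bc: "B \<in> carrier_mat N K"
    using V1_dim by (simp add: B_def kron_def Sm_def N_def K_def)
  have Cc: "C \<in> carrier_mat K N"
    using V1_dim by (simp add: C_def kron_def Sm_def N_def K_def)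
  have Mc: "M \<in> carrier_mat (N+K) (N+K)"
    unfolding M_def using Ac Bc Cc by (intro four_block_carrier_mat) auto
  have divN: "i div m < n" if "i < N" for i
    using that m0 by (simp add: N_def less_mult_imp_div_less)
  have divK: "i div m < n - 1" if "i < K" for i
    using that m0 by (simp add: K_def less_mult_imp_div_less)
  have Aent: "A $$ (i,j) = L $$ (i div m, j div m) * (if i mod m = j mod m then 1 else 0)
      + (if i div m = j div m then to_mat (H (i div m)) $$ (i mod m, j mod m) else 0)"
    if i: "i < N" and j: "j < N" for i j
    proof -
    have dl: "dim_row L = n" "dim_col L = n" using Lc by auto
    have "i div m < n" "j div m < n" using divN i j by auto
    then show ?thesis using i j m0 dl unfolding A_def N_def
      by (simp add: kron_def block_diag_def m_def)
  qed
  have VS: "(V1 * Sm) $$ (r,k) = V1 $$ (r,k) * \<kappa> k" if "r < n" "k < n - 1" for r k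
    using that V1_dim by (simp add: Sm_def scalar_prod_def sum.delta' if_distrib cong: if_cong)
  have SV: "(Sm * transpose_mat V1) $$ (k,r) = \<kappa> k * V1 $$ (r,k)" if "r < n" "k < n - 1" for r k
    proof -
    have e: "\<And>i. (if k = i then \<kappa> i else 0) * V1 $$ (r,i) = (if k = i then \<kappa> k * V1 $$ (r,k) else 0)" by auto
    have e2: "\<And>i. (if k = i then \<kappa> k else 0) * V1 $$ (r,i) = (if k = i then \<kappa> k * V1 $$ (r,k) else 0)" by auto
    show ?thesis using that V1_dim by (simp add: Sm_def scalar_prod_def e e2)
  qed
  have Bent: "B $$ (i,j) = V1 $$ (i div m, j div m) * \<kappa> (j div m) * (if i mod m = j mod m then 1 else 0)"
    if i: "i < N" and j: "j < K" for i j
    proof -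
    have d: "dim_row (V1 * Sm) = n" "dim_col (V1 * Sm) = n - 1" using V1_dim by (auto simp: Sm_def)
    have "i div m < n" "j div m < n - 1" using divN divK i j by auto
    then show ?thesis using i j m0 d unfolding B_def N_def K_def
      by (simp add: kron_def VS del: index_mult_mat)
  qed
  have CB: "C $$ (i,j) = - B $$ (j,i)" if i: "i < K" and j: "j < N" for i j
    proof -
    have d: "dim_row (V1 * Sm) = n" "dim_col (V1 * Sm) = n - 1" using V1_dim by (auto simp: Sm_def)
    have d2: "dim_row (Sm * transpose_mat V1) = n - 1" "dim_col (Sm * transpose_mat V1) = n" using V1_dim by (auto simp: Sm_def)
    have "j div m < n" "i div m < n - 1" using divN divK i j by auto
    then show ?thesis using i j m0 d d2 unfolding B_def C_def N_def K_def
      by (simp add: kron_def VS SV del: index_mult_mat)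
  qed
  have OV: "(\<Sum>p<n. V1 $$ (p,l) * V1 $$ (p,k)) = (if l = k then 1 else 0)" if "l < n - 1" "k < n - 1" for l k
    proof -
    define Vf where "Vf = mat n n (\<lambda>(i,j). if j < n - 1 then V1 $$ (i,j) else 1 / sqrt (real n))"
    have "(transpose_mat Vf * Vf) $$ (l,k) = 1\<^sub>m n $$ (l,k)" using V_orth unfolding Vf_def by simp
    then show ?thesis using that n unfolding Vf_def by (simp add: scalar_prod_def atLeast0LessThan)
  qed
  have dm: "(a*m+b) div m = a" "(a*m+b) mod m = b" if "b < m" for a b
    using that m0 by auto
  have lt: "a*m+b < N" if "a < n" "b < m" for a b
  proof -
    have "a*m+b < a*m+m" using that by simp
    also have "\<dots> = Suc a * m" by simp
    also have "\<dots> \<le> n*m" using that by (intro mult_right_mono) auto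
    finally show ?thesis by (simp add: N_def)
  qed
  have ltK: "a*m+b < K" if "a < n - 1" "b < m" for a b
  proof -
    have "a*m+b < a*m+m" using that by simp
    also have "\<dots> = Suc a * m" by simp
    also have "\<dots> \<le> (n-1)*m" using that by (intro mult_right_mono) auto
    finally show ?thesis by (simp add: K_def)
  qed
  have divmod: "i = i div m * m + i mod m" for i by simp
  define QA where "QA z = (\<Sum>i<N. z i * (\<Sum>j<N. A $$ (i,j) * z j))" for z
  have QAeq: "QA z = (\<Sum>c<m. \<Sum>p<n. \<Sum>q<n. z (p*m+c) * L $$ (p,q) * z (q*m+c))
      + (\<Sum>p<n. \<Sum>c<m. \<Sum>d<m. z (p*m+c) * to_mat (H p) $$ (c,d) * z (p*m+d))" for z
    proof -
    have dm: "(a*m+b) div m = a" "(a*m+b) mod m = b" if "b < m" for a b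
      using that m0 by auto
    have lt: "a*m+b < N" if "a < n" "b < m" for a b
    proof -
      have "a*m+b < a*m+m" using that by simp
      also have "\<dots> = Suc a * m" by simp
      also have "\<dots> \<le> n*m" using that by (intro mult_right_mono) auto
      finally show ?thesis by (simp add: N_def)
    qed
    have rowA: "(\<Sum>j<N. A $$ (p*m+c, j) * z j) = (\<Sum>q<n. L $$ (p,q) * z (q*m+c)) + (\<Sum>d<m. to_mat (H p) $$ (c,d) * z (p*m+d))"
      if p: "p < n" and c: "c < m" for p c
    proof -
      have "(\<Sum>j<N. A $$ (p*m+c, j) * z j) = (\<Sum>q<n. \<Sum>d<m. A $$ (p*m+c, q*m+d) * z (q*m+d))"
        unfolding N_def by (rule sum_lt_mult)
      also have "\<dots> = (\<Sum>q<n. \<Sum>d<m. (if c = d then L $$ (p,q) * z (q*m+c) else 0)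
                   + (if p = q then to_mat (H p) $$ (c,d) * z (p*m+d) else 0))"
      proof (intro sum.cong refl)
        fix q d assume q: "q \<in> {..<n}" and d: "d \<in> {..<m}"
        have "A $$ (p*m+c, q*m+d) = L $$ (p,q) * (if c = d then 1 else 0) + (if p = q then to_mat (H p) $$ (c,d) else 0)"
          using q d p c by (simp add: Aent lt dm)
        then show "A $$ (p*m+c, q*m+d) * z (q*m+d) = (if c = d then L $$ (p,q) * z (q*m+c) else 0)
                   + (if p = q then to_mat (H p) $$ (c,d) * z (p*m+d) else 0)"
          by (simp add: distrib_right)
      qed
      also have "\<dots> = (\<Sum>q<n. L $$ (p,q) * z (q*m+c)) + (\<Sum>d<m. to_mat (H p) $$ (c,d) * z (p*m+d))"
      proof -
        have ifs: "\<And>P (f::nat\<Rightarrow>real) S. (\<Sum>d\<in>S. if P then f d else 0) = (if P then sum f S else 0)" by simp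
        show ?thesis using p c by (simp add: sum.distrib sum.delta sum.delta' ifs cong: if_cong)
      qed
      finally show ?thesis .
    qed
    have "QA z = (\<Sum>p<n. \<Sum>c<m. z (p*m+c) * (\<Sum>j<N. A $$ (p*m+c,j) * z j))"
      unfolding QA_def N_def by (rule sum_lt_mult)
    also have "\<dots> = (\<Sum>p<n. \<Sum>c<m. z (p*m+c) * ((\<Sum>q<n. L $$ (p,q) * z (q*m+c)) + (\<Sum>d<m. to_mat (H p) $$ (c,d) * z (p*m+d))))"
      by (intro sum.cong refl) (simp add: rowA)
    also have "\<dots> = (\<Sum>p<n. \<Sum>c<m. \<Sum>q<n. z (p*m+c) * L $$ (p,q) * z (q*m+c))
      + (\<Sum>p<n. \<Sum>c<m. \<Sum>d<m. z (p*m+c) * to_mat (H p) $$ (c,d) * z (p*m+d))"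
      by (simp add: distrib_left sum.distrib sum_distrib_left mult.assoc)
    also have "(\<Sum>p<n. \<Sum>c<m. \<Sum>q<n. z (p*m+c) * L $$ (p,q) * z (q*m+c))
      = (\<Sum>c<m. \<Sum>p<n. \<Sum>q<n. z (p*m+c) * L $$ (p,q) * z (q*m+c))"
      by (rule sum.swap)
    finally show ?thesis .
  qed
  have h1: "0 \<le> (\<Sum>p<n. \<Sum>q<n. z (p*m+c) * L $$ (p,q) * z (q*m+c))" for z c
    using lap_nonneg[OF graph, of "\<lambda>p. z (p*m+c)"] unfolding L_def .
  have h2: "0 \<le> (\<Sum>c<m. \<Sum>d<m. u c * to_mat (H p) $$ (c,d) * u d)" if "p < n" for u p
    using quad_to_mat[of u "H p"] hess_psd[of "f p" "H p" xs] cvx hess that unfolding m_def by simp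
  have QAnn: "QA z \<ge> 0" for z
    unfolding QAeq by (intro add_nonneg_nonneg sum_nonneg h1 h2) auto
  have QA0: "z i = 0" if "QA z = 0" "i < N" for z i
    proof -
    have n0: "0 < n" using n by simp
    have s1: "0 \<le> (\<Sum>c<m. \<Sum>p<n. \<Sum>q<n. z (p*m+c) * L $$ (p,q) * z (q*m+c))"
      by (intro sum_nonneg h1)
    have s2: "0 \<le> (\<Sum>p<n. \<Sum>c<m. \<Sum>d<m. z (p*m+c) * to_mat (H p) $$ (c,d) * z (p*m+d))"
      by (intro sum_nonneg h2) auto
    have e1: "(\<Sum>c<m. \<Sum>p<n. \<Sum>q<n. z (p*m+c) * L $$ (p,q) * z (q*m+c)) = 0"
      and e2: "(\<Sum>p<n. \<Sum>c<m. \<Sum>d<m. z (p*m+c) * to_mat (H p) $$ (c,d) * z (p*m+d)) = 0"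
      using that(1) s1 s2 unfolding QAeq by linarith+
    have c0: "(\<Sum>p<n. \<Sum>q<n. z (p*m+c) * L $$ (p,q) * z (q*m+c)) = 0" if "c < m" for c
      using sum_zero_each[OF _ _ e1, of c] that h1 by simp
    have zc: "z (p*m+c) = z c" if "p < n" "c < m" for p c
      using lap_zero[OF graph conn, of "\<lambda>p. z (p*m+c)" p 0] c0[OF that(2)] that n0 unfolding L_def by simp
    have p0: "(\<Sum>c<m. \<Sum>d<m. z (p*m+c) * to_mat (H p) $$ (c,d) * z (p*m+d)) = 0" if "p < n" for p
      using sum_zero_each[OF _ _ e2, of p] that h2 by simp
    have p0': "cvec z \<bullet> (H p *v cvec z) = 0" if p: "p < n" for p
    proof -
      have "(\<Sum>c<m. \<Sum>d<m. z c * to_mat (H p) $$ (c,d) * z d) = 0"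
        using p0[OF p] by (simp add: zc p)
      then show ?thesis using quad_to_mat[of z "H p"] unfolding m_def by simp
    qed
    have qz: "cvec z \<bullet> ((\<Sum>p<n. H p) *v cvec z) = 0"
      unfolding quad_sum_mat using p0' by simp
    have cz: "(cvec z :: real^'m) = 0"
    proof (rule ccontr)
      assume "(cvec z :: real^'m) \<noteq> 0"
      from pd[unfolded pos_def_hma_def, rule_format, OF this] qz show False by linarith
    qed
    have "z (i div m * m + i mod m) = z (i mod m)"
      using zc[OF divN[OF that(2)], of "i mod m"] m0 by simp
    also have "\<dots> = 0" using cvec_zero[OF cz, of "i mod m"] m0 unfolding m_def by simp
    finally show ?thesis by simp
  qed
  have Binj: "w j = 0" if "\<forall>i<N. (\<Sum>j<K. B $$ (i,j) * w j) = 0" "j < K" for w j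
    proof -
    have rowB: "(\<Sum>j<K. B $$ (p*m+c, j) * w j) = (\<Sum>k<n-1. V1 $$ (p,k) * \<kappa> k * w (k*m+c))"
      if p: "p < n" and c: "c < m" for p c
    proof -
      have "(\<Sum>j<K. B $$ (p*m+c, j) * w j) = (\<Sum>k<n-1. \<Sum>d<m. B $$ (p*m+c, k*m+d) * w (k*m+d))"
        unfolding K_def by (rule sum_lt_mult)
      also have "\<dots> = (\<Sum>k<n-1. \<Sum>d<m. if c = d then V1 $$ (p,k) * \<kappa> k * w (k*m+c) else 0)"
        by (intro sum.cong refl) (simp add: Bent lt ltK p c dm)
      also have "\<dots> = (\<Sum>k<n-1. V1 $$ (p,k) * \<kappa> k * w (k*m+c))"
        using c by simp
      finally show ?thesis .
    qed
    have l0: "w (l*m+c) = 0" if l: "l < n - 1" and c: "c < m" for l c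
    proof -
      have "0 = (\<Sum>p<n. V1 $$ (p,l) * (\<Sum>k<n-1. V1 $$ (p,k) * \<kappa> k * w (k*m+c)))"
        using that(1) rowB c lt by (simp add: \<open>\<forall>i<N. (\<Sum>j<K. B $$ (i,j) * w j) = 0\<close>[rule_format, OF lt] del: sum.lessThan_Suc)
      also have "\<dots> = (\<Sum>p<n. \<Sum>k<n-1. V1 $$ (p,l) * V1 $$ (p,k) * (\<kappa> k * w (k*m+c)))"
        by (simp add: sum_distrib_left mult.assoc)
      also have "\<dots> = (\<Sum>k<n-1. (\<Sum>p<n. V1 $$ (p,l) * V1 $$ (p,k)) * (\<kappa> k * w (k*m+c)))"
        by (subst sum.swap) (simp add: sum_distrib_right)
      also have "\<dots> = (\<Sum>k<n-1. if l = k then \<kappa> k * w (k*m+c) else 0)"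
      proof (intro sum.cong refl)
        fix k assume "k \<in> {..<n-1}"
        then show "(\<Sum>p<n. V1 $$ (p,l) * V1 $$ (p,k)) * (\<kappa> k * w (k*m+c)) = (if l = k then \<kappa> k * w (k*m+c) else 0)"
          using OV[OF l, of k] by simp
      qed
      also have "\<dots> = \<kappa> l * w (l*m+c)" using l by simp
      finally have "\<kappa> l * w (l*m+c) = 0" by simp
      then show ?thesis using kappa_pos l by force
    qed
    have "j div m < n - 1" using divK that(2) by simp
    then have "w (j div m * m + j mod m) = 0" using l0[of "j div m" "j mod m"] m0 by simp
    then show ?thesis by simp
  qed
  have rowN: "(\<Sum>j<N+K. M $$ (i,j) * z j) = (\<Sum>j<N. A $$ (i,j) * z j) + (\<Sum>j<K. B $$ (i,j) * z (N+j))"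
    if "i < N" for i z
    proof -
    have e1: "\<And>j. j \<in> {..<N} \<Longrightarrow> M $$ (i,j) * z j = A $$ (i,j) * z j" using that Ac Bc Cc unfolding M_def by simp
    have e2: "\<And>j. j \<in> {..<K} \<Longrightarrow> M $$ (i,N+j) * z (N+j) = B $$ (i,j) * z (N+j)" using that Ac Bc Cc unfolding M_def by simp
    show ?thesis unfolding sum_lt_add
      by (intro arg_cong2[where f="(+)"] sum.cong refl) (simp_all only: e1 e2)
  qed
  have "hurwitz (-M)"
    unfolding hurwitz_def
  proof (intro allI impI)
    fix k assume "eigenvalue (map_mat complex_of_real (-M)) k"
    then obtain v where ev: "eigenvector (map_mat complex_of_real (-M)) v k" unfolding eigenvalue_def by blast
    note E = eig_parts[OF Mc ev]
    define a where "a j = Re (vec_index v j)" for j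
    define b where "b j = Im (vec_index v j)" for j
    show "Re k < 0"
    proof (rule ccontr)
      assume "\<not> Re k < 0"
      hence rk: "Re k \<ge> 0" by simp
      have Qeq: "(\<Sum>i<N+K. z i * (\<Sum>j<N+K. M $$ (i,j) * z j)) = QA z" for z
        unfolding M_def QA_def by (rule four_block_quad[OF Ac Bc Cc CB])
      have "QA a + QA b = (\<Sum>i<N+K. a i * (\<Sum>j<N+K. M $$ (i,j) * a j)) + (\<Sum>i<N+K. b i * (\<Sum>j<N+K. M $$ (i,j) * b j))"
        by (simp add: Qeq)
      also have "\<dots> = (\<Sum>i<N+K. a i * (- Re k * a i + Im k * b i) + b i * (- Re k * b i - Im k * a i))"
        unfolding sum.distrib[symmetric] by (intro sum.cong refl) (simp add: a_def b_def E(3) E(4))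
      also have "\<dots> = - Re k * (\<Sum>i<N+K. a i * a i + b i * b i)"
        by (simp add: sum_distrib_left algebra_simps)
      also have "\<dots> \<le> 0" using rk by (intro mult_nonpos_nonneg sum_nonneg) auto
      finally have "QA a + QA b \<le> 0" .
      then have qa: "QA a = 0" and qb: "QA b = 0" using QAnn[of a] QAnn[of b] by linarith+
      have a0: "a i = 0" if "i < N" for i using QA0[OF qa that] .
      have b0: "b i = 0" if "i < N" for i using QA0[OF qb that] .
      have sa: "\<forall>i<N. (\<Sum>j<K. B $$ (i,j) * a (N+j)) = 0"
      proof (intro allI impI)
        fix i assume i: "i < N"
        have "(\<Sum>j<N+K. M $$ (i,j) * a j) = 0" using E(3)[of i] i a0 b0 by (simp add: a_def b_def)
        moreover have "(\<Sum>j<N. A $$ (i,j) * a j) = 0" using a0 by simp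
        ultimately show "(\<Sum>j<K. B $$ (i,j) * a (N+j)) = 0" using rowN[OF i, of a] by simp
      qed
      have sb: "\<forall>i<N. (\<Sum>j<K. B $$ (i,j) * b (N+j)) = 0"
      proof (intro allI impI)
        fix i assume i: "i < N"
        have "(\<Sum>j<N+K. M $$ (i,j) * b j) = 0" using E(4)[of i] i a0 b0 by (simp add: a_def b_def)
        moreover have "(\<Sum>j<N. A $$ (i,j) * b j) = 0" using b0 by simp
        ultimately show "(\<Sum>j<K. B $$ (i,j) * b (N+j)) = 0" using rowN[OF i, of b] by simp
      qed
      have ab0: "a i = 0 \<and> b i = 0" if "i < N+K" for i
      proof (cases "i < N")
        case True then show ?thesis using a0 b0 by simp
      next
        case False
        then have i: "i = N + (i - N)" "i - N < K" using that by auto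
        show ?thesis using Binj[OF sa i(2)] Binj[OF sb i(2)] i(1) by simp
      qed
      have "v = 0\<^sub>v (N+K)"
      proof (rule eq_vecI)
        show "dim_vec v = dim_vec (0\<^sub>v (N+K) :: complex vec)" using E(1) by simp
        fix i assume "i < dim_vec (0\<^sub>v (N+K) :: complex vec)"
        then have i: "i < N+K" by simp
        then show "vec_index v i = vec_index (0\<^sub>v (N+K)) i"
          using ab0[OF i] by (simp add: a_def b_def complex_eq_iff)
      qed
      with E(2) show False by contradiction
    qed
  qed
  then show ?thesis unfolding M_def A_def B_def C_def Sm_def L_def K_def m_def .
qed


end
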